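(* Let $d\ge3$, $\lambda>0$, $x\in\mathbb{S}^{N-1}$, $\mathcal{W}$ from the Gaussian orthogonal tensor ensemble on $\mathcal{S}^d(N)$, and $\mathcal{Y}=\lambda x^{\otimes d}+\frac1{\sqrt N}\mathcal{W}$. Let $(\mu,u)=(\mu(\mathcal{W}),u(\mathcal{W}))$ be an almost everywhere continuously differentiable choice of eigenpair of $\mathcal{Y}$ such that almost surely $\mu\neq0$ and $\mu/(d-1)$ is not an eigenvalue of $\mathcal{Y}\cdot u^{d-2}$, and such that all expectations below are finite and Gaussian integration by parts applies. Then, with $\bar R=\left(\mathcal{Y}\cdot u^{d-2}-\frac{\mu}{d-1}I\right)^{-1}$, $$\mathbb{E}[\mu]=\lambda\,\mathbb{E}\big[\langle x,u\rangle^d\big]+\frac{1}{(d-2)N}\mathbb{E}\Big[\frac1\mu\Big]-\frac{1}{(d-1)N}\mathbb{E}\big[\operatorname{tr}\bar R\big].$$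
   Context: $\mathcal{S}^d(N)$ is the space of real symmetric $d$-th order $N\times\cdots\times N$ tensors; $\mathcal{Y}\cdot u^p$ is the $p$-fold contraction $(\mathcal{Y}\cdot u^p)_{i_{p+1}\dots i_d}=\sum_{i_1,\dots,i_p}Y_{i_1\dots i_d}u_{i_1}\cdots u_{i_p}$; an eigenpair $(\mu,u)$ satisfies $\mathcal{Y}\cdot u^{d-1}=\mu u$, $\|u\|=1$. The Gaussian orthogonal tensor ensemble has density proportional to $e^{-\frac12\|\mathcal{W}\|_F^2}$; equivalently the entries $W_{i_1\dots i_d}$, $i_1\le\dots\le i_d$, are independent centered Gaussians with variance equal to the reciprocal of the number of distinct permutations of $(i_1,\dots,i_d)$. *)

theory Defs
  imports "HOL-Probability.Probability" "HOL-Library.Multiset"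
begin

text \<open>Coordinates are indexed by a finite type 'n, so N = CARD('n).
  A d-th order tensor is a function on index lists (only lists of length d matter).
  The Gaussian orthogonal tensor ensemble is parametrised by its independent entries
  W_{i_1..i_d}, i_1 \<le> ... \<le> i_d, i.e. by a function on multisets of size d.\<close>

definition idx_set :: "nat \<Rightarrow> 'n multiset set" where
  "idx_set d = {m. size m = d}"

definition perm_count :: "'n multiset \<Rightarrow> nat" where
  "perm_count m = card {xs. mset xs = m}"

definition gote :: "nat \<Rightarrow> ('n::finite multiset \<Rightarrow> real) measure" where
  "gote d = PiM (idx_set d)
     (\<lambda>m. density lborel (normal_density 0 (sqrt (1 / real (perm_count m)))))"

definition tensor_of :: "('n multiset \<Rightarrow> real) \<Rightarrow> ('n list \<Rightarrow> real)" where
  "tensor_of g = (\<lambda>is. g (mset is))"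

definition tensor_pow :: "real^'n \<Rightarrow> ('n list \<Rightarrow> real)" where
  "tensor_pow x = (\<lambda>is. prod_list (map (\<lambda>i. x $ i) is))"

definition contract :: "('n::finite list \<Rightarrow> real) \<Rightarrow> real^'n \<Rightarrow> nat \<Rightarrow> ('n list \<Rightarrow> real)" where
  "contract Y u p = (\<lambda>js. \<Sum>is\<in>{is. length is = p}. Y (is @ js) * prod_list (map (\<lambda>i. u $ i) is))"

definition contract_vec :: "('n::finite list \<Rightarrow> real) \<Rightarrow> real^'n \<Rightarrow> nat \<Rightarrow> real^'n" where
  "contract_vec Y u p = (\<chi> j. contract Y u p [j])"

definition contract_mat :: "('n::finite list \<Rightarrow> real) \<Rightarrow> real^'n \<Rightarrow> nat \<Rightarrow> real^'n^'n" where
  "contract_mat Y u p = (\<chi> i j. contract Y u p [i, j])"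

definition is_eigenpair :: "nat \<Rightarrow> ('n::finite list \<Rightarrow> real) \<Rightarrow> real \<Rightarrow> real^'n \<Rightarrow> bool" where
  "is_eigenpair d Y \<mu> u \<longleftrightarrow> contract_vec Y u (d - 1) = \<mu> *\<^sub>R u \<and> norm u = 1"

definition has_eigenvalue :: "real^'n^'n \<Rightarrow> real \<Rightarrow> bool" where
  "has_eigenvalue A c \<longleftrightarrow> (\<exists>v. v \<noteq> 0 \<and> A *v v = c *\<^sub>R v)"

definition spiked :: "real \<Rightarrow> real^'n::finite \<Rightarrow> ('n multiset \<Rightarrow> real) \<Rightarrow> ('n list \<Rightarrow> real)" where
  "spiked lam x g = (\<lambda>is. lam * tensor_pow x is + tensor_of g is / sqrt (real CARD('n)))"

definition partial :: "(('a \<Rightarrow> real) \<Rightarrow> real) \<Rightarrow> 'a \<Rightarrow> ('a \<Rightarrow> real) \<Rightarrow> real" where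
  "partial F m g = deriv (\<lambda>t. F (g(m := t))) (g m)"

definition C1_at :: "'a set \<Rightarrow> (('a \<Rightarrow> real) \<Rightarrow> real) \<Rightarrow> ('a \<Rightarrow> real) \<Rightarrow> bool" where
  "C1_at S F g \<longleftrightarrow> (\<exists>U. openin (top_of_set (PiE S (\<lambda>_. UNIV))) U \<and> g \<in> U \<and>
      (\<forall>h\<in>U. \<forall>m\<in>S. (\<lambda>t. F (h(m := t))) differentiable (at (h m))) \<and>
      (\<forall>m\<in>S. continuous_on U (partial F m)))"

end

theory Submission
  imports Defs
begin

definition L :: "nat \<Rightarrow> 'n list set" where "L n = {is. length is = n}"
definition symt :: "('n list \<Rightarrow> real) \<Rightarrow> bool" where
  "symt T \<longleftrightarrow> (\<forall>a b. mset a = mset b \<longrightarrow> T a = T b)"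

lemma finite_L: "finite (L n :: 'n::finite list set)"
  using finite_lists_length_eq[of "UNIV::'n set" n] by (simp add: L_def)

lemma L_Suc_image: "L (Suc n) = (\<lambda>(is,k). is @ [k]) ` (L n \<times> UNIV)"
proof (rule set_eqI, rule iffI)
  fix xs assume "xs \<in> L (Suc n)"
  then have "xs = butlast xs @ [last xs]" "butlast xs \<in> L n"
    by (auto simp: L_def intro!: append_butlast_last_id[symmetric])
  then show "xs \<in> (\<lambda>(is,k). is @ [k]) ` (L n \<times> UNIV)" by (metis (no_types, lifting) SigmaI UNIV_I case_prod_conv image_eqI)
qed (auto simp: L_def)

lemma sum_L_Suc:
  fixes f :: "'n::finite list \<Rightarrow> real"
  shows "sum f (L (Suc n)) = (\<Sum>k\<in>UNIV. \<Sum>is\<in>L n. f (is @ [k]))"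
proof -
  have inj: "inj_on (\<lambda>(is,k). is @ [k]) (L n \<times> (UNIV::'n set))"
    by (auto simp: inj_on_def)
  have "sum f (L (Suc n)) = sum (f \<circ> (\<lambda>(is,k). is @ [k])) (L n \<times> UNIV)"
    unfolding L_Suc_image by (rule sum.reindex[OF inj])
  also have "\<dots> = (\<Sum>is\<in>L n. \<Sum>k\<in>UNIV. f (is @ [k]))"
    by (simp add: sum.cartesian_product comp_def split_def)
  also have "\<dots> = (\<Sum>k\<in>UNIV. \<Sum>is\<in>L n. f (is @ [k]))"
    by (rule sum.swap)
  finally show ?thesis .
qed

lemma contract_L: "contract Y u p js = (\<Sum>is\<in>L p. Y (is @ js) * prod_list (map (\<lambda>i. u $ i) is))"
  by (simp add: contract_def L_def)

lemma L_0: "L 0 = {[]}" by (auto simp: L_def)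

lemma contract_0: "contract Y u 0 js = Y js"
  by (simp add: contract_L L_0)

lemma contract_Suc: "contract Y u (Suc p) js = (\<Sum>k\<in>UNIV. u $ k * contract Y u p (k # js))"
  unfolding contract_L sum_L_Suc
  by (simp add: sum_distrib_left algebra_simps)

lemma sum_L_prod: "(\<Sum>is\<in>L n. prod_list (map (f::'n::finite\<Rightarrow>real) is)) = (\<Sum>i\<in>(UNIV::'n::finite set). f i) ^ n"
proof (induction n)
  case 0
  show ?case by (simp add: L_0)
next
  case (Suc n)
  have "(\<Sum>is\<in>L (Suc n). prod_list (map f is)) = (\<Sum>k\<in>UNIV. \<Sum>is\<in>L n. f k * prod_list (map f is))"
    unfolding sum_L_Suc by (simp add: mult.commute)
  also have "\<dots> = (\<Sum>k\<in>UNIV. f k) * (\<Sum>is\<in>L n. prod_list (map f is))"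
    by (simp add: sum_product)
  finally show ?case by (simp add: Suc.IH)
qed

lemma contract_sym:
  assumes "symt Y" "mset js = mset js'"
  shows "contract Y u p js = contract Y u p js'"
  unfolding contract_L using assms by (auto simp: symt_def intro!: sum.cong)

lemma contract_scale: "contract (\<lambda>is. c * T is) u p js = c * contract T u p js"
  unfolding contract_L by (simp add: sum_distrib_left mult.assoc)

lemma contract_zero: "contract (\<lambda>is. 0) u p js = 0"
  unfolding contract_L by simp

lemma swap_sum_inner:
  assumes "symt Y"
  shows "(\<Sum>k\<in>UNIV. u $ k * contract Y u q (l # k # js)) = contract Y u (Suc q) (l # js)"
proof -
  have "\<And>k. contract Y u q (l # k # js) = contract Y u q (k # l # js)"
    by (rule contract_sym[OF assms]) simp
  then show ?thesis by (simp add: contract_Suc)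
qed

lemma contract_deriv:
  fixes Yt :: "real \<Rightarrow> 'n::finite list \<Rightarrow> real" and w :: "real \<Rightarrow> real^'n"
  assumes Y: "\<And>is. ((\<lambda>t. Yt t is) has_real_derivative Y' is) (at t0)"
    and W: "\<And>i. ((\<lambda>t. w t $ i) has_real_derivative v $ i) (at t0)"
    and S: "symt (Yt t0)"
  shows "((\<lambda>t. contract (Yt t) (w t) p js) has_real_derivative
           (contract Y' (w t0) p js + real p * (\<Sum>k\<in>UNIV. v$k * contract (Yt t0) (w t0) (p - 1) (k#js)))) (at t0)"
proof (induction p arbitrary: js)
  case 0 show ?case by (simp add: contract_0 Y)
next
  case (Suc p)
  let ?C = "\<lambda>q js. contract (Yt t0) (w t0) q js"
  let ?u = "w t0"
  have D: "((\<lambda>t. contract (Yt t) (w t) (Suc p) js) has_real_derivative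
     (\<Sum>k\<in>UNIV. v$k * ?C p (k#js) + (contract Y' ?u p (k#js) + real p * (\<Sum>l\<in>UNIV. v$l * ?C (p-1) (l#k#js))) * ?u $ k)) (at t0)"
    unfolding contract_Suc by (intro DERIV_sum DERIV_mult W Suc.IH)
  have e1: "(\<Sum>k\<in>UNIV. (contract Y' ?u p (k#js)) * ?u $ k) = contract Y' ?u (Suc p) js"
    by (simp add: contract_Suc mult.commute)
  have e2: "(\<Sum>k\<in>UNIV. (real p * (\<Sum>l\<in>UNIV. v$l * ?C (p-1) (l#k#js))) * ?u $ k)
        = real p * (\<Sum>l\<in>UNIV. v$l * ?C p (l#js))"
  proof (cases p)
    case 0 then show ?thesis by simp
  next
    case (Suc q)
    have "(\<Sum>k\<in>UNIV. (real p * (\<Sum>l\<in>UNIV. v$l * ?C q (l#k#js))) * ?u $ k)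
        = real p * (\<Sum>l\<in>UNIV. v$l * (\<Sum>k\<in>UNIV. ?u $ k * ?C q (l#k#js)))"
    proof -
      have "(\<Sum>k\<in>UNIV. (real p * (\<Sum>l\<in>UNIV. v$l * ?C q (l#k#js))) * ?u $ k)
          = real p * (\<Sum>k\<in>UNIV. \<Sum>l\<in>UNIV. v$l * (?u $ k * ?C q (l#k#js)))"
      proof -
        have "\<And>k. (real p * (\<Sum>l\<in>UNIV. v$l * ?C q (l#k#js))) * ?u $ k
           = real p * (\<Sum>l\<in>UNIV. v$l * (?u $ k * ?C q (l#k#js)))"
          apply (simp only: sum_distrib_right mult.assoc)
          apply (intro arg_cong[where f="\<lambda>x. real p * x"] sum.cong refl)
          by (simp add: ac_simps)
        then show ?thesis by (simp add: sum_distrib_left)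
      qed
      also have "\<dots> = real p * (\<Sum>l\<in>UNIV. \<Sum>k\<in>UNIV. v$l * (?u $ k * ?C q (l#k#js)))"
        by (rule arg_cong[where f="\<lambda>x. real p * x"], rule sum.swap)
      also have "\<dots> = real p * (\<Sum>l\<in>UNIV. v$l * (\<Sum>k\<in>UNIV. ?u $ k * ?C q (l#k#js)))"
        by (simp only: sum_distrib_left)
      finally show ?thesis .
    qed
    also have "\<dots> = real p * (\<Sum>l\<in>UNIV. v$l * ?C p (l#js))"
      using swap_sum_inner[OF S] Suc by simp
    finally show ?thesis using Suc by simp
  qed
  have "(\<Sum>k\<in>UNIV. v$k * ?C p (k#js) + (contract Y' ?u p (k#js) + real p * (\<Sum>l\<in>UNIV. v$l * ?C (p-1) (l#k#js))) * ?u $ k)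
      = (\<Sum>k\<in>UNIV. v$k * ?C p (k#js)) + (\<Sum>k\<in>UNIV. (contract Y' ?u p (k#js)) * ?u $ k)
        + (\<Sum>k\<in>UNIV. (real p * (\<Sum>l\<in>UNIV. v$l * ?C (p-1) (l#k#js))) * ?u $ k)"
    by (simp add: sum.distrib distrib_right)
  also have "\<dots> = contract Y' ?u (Suc p) js + real (Suc p) * (\<Sum>k\<in>UNIV. v$k * ?C (Suc p - 1) (k#js))"
    using e1 e2 by (simp add: algebra_simps)
  finally show ?case using D by simp
qed

definition indm :: "'n multiset \<Rightarrow> 'n list \<Rightarrow> real" where
  "indm m is = (if mset is = m then 1 else 0)"

definition upm :: "real^'n \<Rightarrow> 'n multiset \<Rightarrow> real" where
  "upm w m = prod_mset (image_mset (\<lambda>i. w $ i) m)"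

lemma symt_Im: "symt (indm m)" by (simp add: symt_def indm_def)

lemma up_upm: "prod_list (map (\<lambda>i. w $ i) is) = upm w (mset is)"
  by (simp add: upm_def prod_mset_prod_list[symmetric])

lemma idx_set_image: "idx_set d = mset ` (L d :: 'n::finite list set)"
  by (auto simp: idx_set_def L_def image_iff) (metis ex_mset size_mset)

lemma finite_idx_set: "finite (idx_set d :: 'n::finite multiset set)"
  by (simp add: idx_set_image finite_L)

lemma fiber_eq: "m \<in> idx_set d \<Longrightarrow> {is \<in> L d. mset is = m} = {xs. mset xs = m}"
  by (auto simp: idx_set_def L_def)

lemma pc_pos: "m \<in> idx_set d \<Longrightarrow> perm_count (m::'n::finite multiset) > 0"
proof -
  assume m: "m \<in> idx_set d"
  have fin: "finite {xs. mset xs = m}"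
    using fiber_eq[OF m] finite_L[of d] by (metis (no_types, lifting) finite_subset mem_Collect_eq subsetI)
  obtain xs where "mset xs = m" using ex_mset by blast
  then have "{xs. mset xs = m} \<noteq> {}" by auto
  then show ?thesis using fin by (simp add: perm_count_def card_gt_0_iff)
qed

lemma sum_group_L:
  fixes f :: "'n::finite list \<Rightarrow> real"
  shows "sum f (L d) = (\<Sum>m\<in>idx_set d. \<Sum>is\<in>{xs. mset xs = m}. f is)"
proof -
  have "sum f (L d) = (\<Sum>m\<in>idx_set d. \<Sum>is\<in>{is \<in> L d. mset is = m}. f is)"
    by (rule sum.group[symmetric]) (auto simp: finite_L finite_idx_set idx_set_image)
  also have "\<dots> = (\<Sum>m\<in>idx_set d. \<Sum>is\<in>{xs. mset xs = m}. f is)"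
    by (rule sum.cong[OF refl]) (simp add: fiber_eq)
  finally show ?thesis .
qed

lemma sum_group_L_mset:
  fixes h :: "'n::finite multiset \<Rightarrow> real"
  shows "(\<Sum>is\<in>L d. h (mset is)) = (\<Sum>m\<in>idx_set d. real (perm_count m) * h m)"
  unfolding sum_group_L by (rule sum.cong[OF refl]) (simp add: perm_count_def)

lemma contract_Im_full:
  assumes "m \<in> idx_set d"
  shows "contract (indm m) w d [] = real (perm_count m) * upm w m"
proof -
  have "contract (indm m) w d [] = (\<Sum>is\<in>L d. indm m is * upm w (mset is))"
    by (simp add: contract_L up_upm)
  also have "\<dots> = (\<Sum>m'\<in>idx_set d. real (perm_count m') * ((if m' = m then 1 else 0) * upm w m'))"
    using sum_group_L_mset[of "\<lambda>m'. (if m' = m then 1 else 0) * upm w m'" d]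
    by (simp add: indm_def)
  also have "\<dots> = (\<Sum>m'\<in>idx_set d. if m' = m then real (perm_count m') * upm w m' else 0)"
    by (rule sum.cong) auto
  also have "\<dots> = real (perm_count m) * upm w m"
    using assms finite_idx_set[of d] by (subst sum.delta) auto
  finally show ?thesis .
qed

lemma sum_up_up:
  "(\<Sum>is\<in>L d. upm w (mset is) * upm z (mset is)) = (\<Sum>i\<in>UNIV. w $ i * z $ i) ^ d"
proof -
  have "\<And>is. upm w (mset is) * upm z (mset is) = prod_list (map (\<lambda>i. w $ i * z $ i) is)"
    by (simp add: up_upm[symmetric]) (induct_tac "is", simp_all)
  then show ?thesis by (simp add: sum_L_prod)
qed

lemma vec_line_deriv: "((\<lambda>t. (u + t *\<^sub>R c) $ i) has_real_derivative c $ i) (at t0)"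
  by (auto intro!: derivative_eq_intros)

lemma vec_line_deriv': "((\<lambda>t. u $ i + t * c $ i) has_real_derivative c $ i) (at t0)"
  by (auto intro!: derivative_eq_intros)

lemma lin_deriv:
  fixes u a z :: "real^'n::finite"
  shows "((\<lambda>s. \<Sum>i\<in>UNIV. (u + s *\<^sub>R a) $ i * z $ i) has_real_derivative (\<Sum>i\<in>UNIV. a$i * z$i)) (at s0)"
  by (auto intro!: DERIV_sum derivative_eq_intros)

lemma lin_deriv2:
  fixes u a z :: "real^'n::finite"
  shows "((\<lambda>s. \<Sum>i\<in>UNIV. z $ i * (u + s *\<^sub>R a) $ i) has_real_derivative (\<Sum>i\<in>UNIV. z$i * a$i)) (at s0)"
  by (auto intro!: DERIV_sum derivative_eq_intros)

lemma upm_line_deriv: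
  fixes u c :: "real^'n::finite"
  assumes m: "m \<in> idx_set d"
  shows "((\<lambda>t. upm (u + t *\<^sub>R c) m) has_real_derivative
           real d * (\<Sum>j\<in>UNIV. c$j * contract (indm m) u (d-1) [j]) / real (perm_count m)) (at 0)"
proof -
  have D: "((\<lambda>t. contract (indm m) (u + t *\<^sub>R c) d []) has_real_derivative
        (contract (\<lambda>is. 0) (u + 0 *\<^sub>R c) d [] + real d * (\<Sum>k\<in>UNIV. c$k * contract (indm m) (u + 0 *\<^sub>R c) (d - 1) [k]))) (at 0)"
    by (rule contract_deriv[where Yt="\<lambda>t. indm m"]) (auto simp: symt_Im vec_line_deriv vec_line_deriv')
  have "((\<lambda>t. contract (indm m) (u + t *\<^sub>R c) d [] / real (perm_count m)) has_real_derivative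
        (real d * (\<Sum>k\<in>UNIV. c$k * contract (indm m) u (d - 1) [k])) / real (perm_count m)) (at 0)"
    using DERIV_cdivide[OF D] by (simp add: contract_zero)
  moreover have "\<And>t. contract (indm m) (u + t *\<^sub>R c) d [] / real (perm_count m) = upm (u + t *\<^sub>R c) m"
    using contract_Im_full[OF m] pc_pos[OF m] by simp
  ultimately show ?thesis by simp
qed

lemma mset_L_idx: "is \<in> L d \<Longrightarrow> mset is \<in> idx_set d"
  by (simp add: L_def idx_set_def)

lemma alg1:
  fixes S A B C D E :: real
  assumes "S = (D*(E*A*B) + D*C)/D^2" "D > 0"
  shows "S = (1/D)*C + (E/D)*A*B"
proof -
  have "S * D^2 = D*(E*A*B) + D*C" using assms by (simp add: field_simps)
  then have "D * (S*D) = D * (E*A*B + C)" by (simp add: power2_eq_square algebra_simps)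
  then have "S*D = E*A*B + C" using assms(2) by simp
  then show ?thesis using assms(2) by (simp add: field_simps)
qed

lemma S_identity:
  fixes u a b :: "real^'n::finite"
  assumes u1: "(\<Sum>i\<in>UNIV. u$i * u$i) = 1" and d1: "d \<ge> 1"
  shows "(\<Sum>m\<in>idx_set d. (1 / real (perm_count m)) * (\<Sum>j\<in>UNIV. a$j * contract (indm m) u (d-1) [j])
            * (\<Sum>j\<in>UNIV. b$j * contract (indm m) u (d-1) [j]))
    = (1 / real d) * (\<Sum>i\<in>UNIV. a$i * b$i) + (real (d - 1) / real d) * (\<Sum>i\<in>UNIV. a$i * u$i) * (\<Sum>i\<in>UNIV. b$i * u$i)"
proof -
  define \<delta> where "\<delta> c m = real d * (\<Sum>j\<in>UNIV. c$j * contract (indm m) u (d-1) [j]) / real (perm_count m)" for c m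
  have dd: "\<And>c m. m \<in> idx_set d \<Longrightarrow> ((\<lambda>t. upm (u + t *\<^sub>R c) m) has_real_derivative \<delta> c m) (at 0)"
    unfolding \<delta>_def by (rule upm_line_deriv)
  have dpos: "real d > 0" using d1 by simp
  have key: "(\<Sum>is\<in>L d. \<delta> a (mset is) * \<delta> b (mset is))
      = real d * (real (d - 1) * (\<Sum>i\<in>UNIV. a$i * u$i) * (\<Sum>i\<in>UNIV. u$i * b$i)) + real d * (\<Sum>i\<in>UNIV. a$i * b$i)"
  proof -
    have step: "(\<Sum>is\<in>L d. upm (u + s *\<^sub>R a) (mset is) * \<delta> b (mset is))
        = real d * (\<Sum>i\<in>UNIV. (u + s *\<^sub>R a) $ i * u $ i) ^ (d - 1) * (\<Sum>i\<in>UNIV. (u + s *\<^sub>R a) $ i * b $ i)" for s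
    proof -
      have D1: "((\<lambda>t. \<Sum>is\<in>L d. upm (u + s *\<^sub>R a) (mset is) * upm (u + t *\<^sub>R b) (mset is)) has_real_derivative
              (\<Sum>is\<in>L d. upm (u + s *\<^sub>R a) (mset is) * \<delta> b (mset is))) (at 0)"
        by (intro DERIV_sum DERIV_cmult dd mset_L_idx)
      have D2: "((\<lambda>t. (\<Sum>i\<in>UNIV. (u + s *\<^sub>R a) $ i * (u + t *\<^sub>R b) $ i) ^ d) has_real_derivative
              real d * ((\<Sum>i\<in>UNIV. (u + s *\<^sub>R a) $ i * b $ i) * (\<Sum>i\<in>UNIV. (u + s *\<^sub>R a) $ i * (u + 0 *\<^sub>R b) $ i) ^ (d - Suc 0))) (at 0)"
        by (intro DERIV_power lin_deriv2)
      have fe1: "(\<lambda>t. \<Sum>is\<in>L d. upm (u + s *\<^sub>R a) (mset is) * upm (u + t *\<^sub>R b) (mset is))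
          = (\<lambda>t. (\<Sum>i\<in>UNIV. (u + s *\<^sub>R a) $ i * (u + t *\<^sub>R b) $ i) ^ d)"
        by (rule ext) (rule sum_up_up)
      have "(\<Sum>is\<in>L d. upm (u + s *\<^sub>R a) (mset is) * \<delta> b (mset is))
          = real d * ((\<Sum>i\<in>UNIV. (u + s *\<^sub>R a) $ i * b $ i) * (\<Sum>i\<in>UNIV. (u + s *\<^sub>R a) $ i * (u + 0 *\<^sub>R b) $ i) ^ (d - Suc 0))"
        using DERIV_unique[OF D1[unfolded fe1] D2] .
      then show ?thesis by (simp add: ac_simps)
    qed
    have D3: "((\<lambda>s. \<Sum>is\<in>L d. upm (u + s *\<^sub>R a) (mset is) * \<delta> b (mset is)) has_real_derivative
              (\<Sum>is\<in>L d. \<delta> a (mset is) * \<delta> b (mset is))) (at 0)"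
      by (intro DERIV_sum DERIV_cmult_right dd mset_L_idx)
    have D4: "((\<lambda>s. real d * (\<Sum>i\<in>UNIV. (u + s *\<^sub>R a) $ i * u $ i) ^ (d - 1) * (\<Sum>i\<in>UNIV. (u + s *\<^sub>R a) $ i * b $ i))
        has_real_derivative
        real d * (of_nat (d - 1) * ((\<Sum>i\<in>UNIV. a$i * u$i) * (\<Sum>i\<in>UNIV. (u + 0 *\<^sub>R a) $ i * u $ i) ^ (d - 1 - Suc 0))) *
            (\<Sum>i\<in>UNIV. (u + 0 *\<^sub>R a) $ i * b $ i)
        + (\<Sum>i\<in>UNIV. a$i * b$i) * (real d * (\<Sum>i\<in>UNIV. (u + 0 *\<^sub>R a) $ i * u $ i) ^ (d - 1))) (at 0)"
      by (intro DERIV_mult DERIV_cmult DERIV_power lin_deriv)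
    have "(\<Sum>is\<in>L d. \<delta> a (mset is) * \<delta> b (mset is)) =
        real d * (of_nat (d - 1) * ((\<Sum>i\<in>UNIV. a$i * u$i) * (\<Sum>i\<in>UNIV. (u + 0 *\<^sub>R a) $ i * u $ i) ^ (d - 1 - Suc 0))) *
            (\<Sum>i\<in>UNIV. (u + 0 *\<^sub>R a) $ i * b $ i)
        + (\<Sum>i\<in>UNIV. a$i * b$i) * (real d * (\<Sum>i\<in>UNIV. (u + 0 *\<^sub>R a) $ i * u $ i) ^ (d - 1))"
    proof -
      have fe: "(\<lambda>s. \<Sum>is\<in>L d. upm (u + s *\<^sub>R a) (mset is) * \<delta> b (mset is))
         = (\<lambda>s. real d * (\<Sum>i\<in>UNIV. (u + s *\<^sub>R a) $ i * u $ i) ^ (d - 1) * (\<Sum>i\<in>UNIV. (u + s *\<^sub>R a) $ i * b $ i))"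
        by (rule ext) (rule step)
      show ?thesis using DERIV_unique[OF D3[unfolded fe] D4] .
    qed
    also have "\<dots> = real d * (real (d - 1) * (\<Sum>i\<in>UNIV. a$i * u$i) * (\<Sum>i\<in>UNIV. u$i * b$i)) + real d * (\<Sum>i\<in>UNIV. a$i * b$i)"
      using u1 by simp
    finally show ?thesis .
  qed
  have "(\<Sum>m\<in>idx_set d. (1 / real (perm_count m)) * (\<Sum>j\<in>UNIV. a$j * contract (indm m) u (d-1) [j])
            * (\<Sum>j\<in>UNIV. b$j * contract (indm m) u (d-1) [j]))
      = (\<Sum>m\<in>idx_set d. real (perm_count m) * (\<delta> a m * \<delta> b m)) / (real d)^2"
    unfolding sum_divide_distrib
  proof (rule sum.cong[OF refl])
    fix m :: "'n multiset" assume m: "m \<in> idx_set d"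
    have "real (perm_count m) > 0" using pc_pos[OF m] by simp
    then show "1 / real (perm_count m) * (\<Sum>j\<in>UNIV. a $ j * contract (indm m) u (d - 1) [j]) *
         (\<Sum>j\<in>UNIV. b $ j * contract (indm m) u (d - 1) [j]) =
         real (perm_count m) * (\<delta> a m * \<delta> b m) / (real d)\<^sup>2"
      unfolding \<delta>_def using dpos by (simp add: field_simps power2_eq_square)
  qed
  also have "\<dots> = (\<Sum>is\<in>L d. \<delta> a (mset is) * \<delta> b (mset is)) / (real d)^2"
    using sum_group_L_mset[of "\<lambda>m. \<delta> a m * \<delta> b m" d] by (simp only:)
  also have "\<dots> = (real d * (real (d - 1) * (\<Sum>i\<in>UNIV. a$i * u$i) * (\<Sum>i\<in>UNIV. u$i * b$i)) + real d * (\<Sum>i\<in>UNIV. a$i * b$i)) / (real d)^2"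
    by (simp only: key)
  also have "(\<Sum>i\<in>UNIV. u$i * b$i) = (\<Sum>i\<in>UNIV. b$i * u$i)"
    by (simp add: mult.commute)
  finally show ?thesis
    by (rule alg1[OF _ dpos])
qed

lemma symt_spiked: "symt (spiked lam x h)"
  unfolding symt_def spiked_def tensor_pow_def tensor_of_def
  by (auto simp: up_upm)

lemma eig_comp:
  assumes "is_eigenpair d Y mu w"
  shows "contract Y w (d-1) [j] = mu * w$j" "(\<Sum>i\<in>UNIV. w$i * w$i) = 1"
proof -
  from assms have "contract_vec Y w (d - 1) = mu *\<^sub>R w" "norm w = 1" by (auto simp: is_eigenpair_def)
  then show "contract Y w (d-1) [j] = mu * w$j"
  proof -
    have "contract_vec Y w (d - 1) $ j = (mu *\<^sub>R w) $ j" using \<open>contract_vec Y w (d - 1) = mu *\<^sub>R w\<close> by simp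
    then show ?thesis by (simp add: contract_vec_def)
  qed
  from \<open>norm w = 1\<close> show "(\<Sum>i\<in>UNIV. w$i * w$i) = 1"
    by (simp add: norm_eq_1 inner_vec_def)
qed

lemma sqrt_div_self: "(x::real) \<ge> 0 \<Longrightarrow> sqrt x / x = 1 / sqrt x"
proof (cases "x = 0")
  case False
  assume "x \<ge> 0"
  then have "sqrt x * sqrt x = x" by simp
  with False show ?thesis by (metis divide_divide_eq_right div_by_1 nonzero_mult_div_cancel_left real_sqrt_eq_zero_cancel_iff)
qed simp

lemma spiked_deriv:
  fixes x :: "real^'n::finite" and g :: "'n multiset \<Rightarrow> real"
  shows "((\<lambda>t. spiked lam x (g(m:=t)) is) has_real_derivative (1 / sqrt (real CARD('n::finite))) * indm m is) (at t0)"
proof (cases "mset is = m")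
  case True
  then have "(\<lambda>t. spiked lam x (g(m:=t)) is) = (\<lambda>t. lam * tensor_pow x is + t / sqrt (real CARD('n)))"
    by (auto simp: spiked_def tensor_of_def)
  moreover have "sqrt (real CARD('n)) / real CARD('n) = 1 / sqrt (real CARD('n))"
    by (rule sqrt_div_self) simp
  ultimately show ?thesis using True by (auto simp: indm_def intro!: derivative_eq_intros)
next
  case False
  then have "(\<lambda>t. spiked lam x (g(m:=t)) is) = (\<lambda>t. spiked lam x g is)"
    by (auto simp: spiked_def tensor_of_def)
  then show ?thesis using False by (simp add: indm_def)
qed

lemma prod_list_deriv_ex:
  assumes "\<And>i. ((\<lambda>t. w t $ i) has_real_derivative v $ i) (at t0)"
  shows "\<exists>D. ((\<lambda>t. prod_list (map (\<lambda>i. w t $ i) is)) has_real_derivative D) (at t0)"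
proof (induction "is")
  case Nil show ?case by (rule exI[of _ 0]) simp
next
  case (Cons a xs)
  then obtain D where "((\<lambda>t. prod_list (map (\<lambda>i. w t $ i) xs)) has_real_derivative D) (at t0)" by blast
  from DERIV_mult[OF assms[of a] this] show ?case by auto
qed

lemma contract_Im_fiber:
  assumes "m \<in> idx_set d"
  shows "contract (indm m) w d [] = (\<Sum>is\<in>{xs. mset xs = m}. prod_list (map (\<lambda>i. w $ i) is))"
proof -
  have "contract (indm m) w d [] = (\<Sum>is\<in>L d. if mset is = m then prod_list (map (\<lambda>i. w $ i) is) else 0)"
    by (auto simp: contract_L indm_def intro!: sum.cong)
  also have "\<dots> = (\<Sum>is\<in>{is \<in> L d. mset is = m}. prod_list (map (\<lambda>i. w $ i) is))"
    by (simp add: sum.inter_filter[symmetric] finite_L)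
  also have "\<dots> = (\<Sum>is\<in>{xs. mset xs = m}. prod_list (map (\<lambda>i. w $ i) is))"
    by (simp add: fiber_eq[OF assms])
  finally show ?thesis .
qed

lemma psum_lemma:
  fixes u :: "('n::finite multiset \<Rightarrow> real) \<Rightarrow> real^'n"
  assumes m: "m \<in> idx_set d"
    and W: "\<And>i. ((\<lambda>t. u (g(m:=t)) $ i) has_real_derivative v $ i) (at (g m))"
  shows "(\<Sum>is\<in>{xs. mset xs = m}. partial (\<lambda>h. prod_list (map (\<lambda>i. u h $ i) is)) m g)
     = real d * (\<Sum>k\<in>UNIV. v$k * contract (indm m) (u g) (d - 1) [k])"
proof -
  have fin: "finite {xs. mset xs = m}"
    using fiber_eq[OF m] finite_L[of d] by (metis (no_types, lifting) finite_subset mem_Collect_eq subsetI)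
  have ex: "\<And>is. \<exists>D. ((\<lambda>t. prod_list (map (\<lambda>i. u (g(m:=t)) $ i) is)) has_real_derivative D) (at (g m))"
    by (rule prod_list_deriv_ex[OF W])
  define D where "D is = (SOME D. ((\<lambda>t. prod_list (map (\<lambda>i. u (g(m:=t)) $ i) is)) has_real_derivative D) (at (g m)))" for "is"
  have DD: "((\<lambda>t. prod_list (map (\<lambda>i. u (g(m:=t)) $ i) is)) has_real_derivative D is) (at (g m))" for "is"
    unfolding D_def using someI_ex[OF ex] .
  have pD: "partial (\<lambda>h. prod_list (map (\<lambda>i. u h $ i) is)) m g = D is" for "is"
    unfolding partial_def using DERIV_imp_deriv[OF DD] .
  have S1: "((\<lambda>t. \<Sum>is\<in>{xs. mset xs = m}. prod_list (map (\<lambda>i. u (g(m:=t)) $ i) is)) has_real_derivative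
        (\<Sum>is\<in>{xs. mset xs = m}. D is)) (at (g m))"
    by (intro DERIV_sum DD)
  have S2: "((\<lambda>t. contract (indm m) (u (g(m:=t))) d []) has_real_derivative
        (contract (\<lambda>is. 0) (u (g(m:=g m))) d [] + real d * (\<Sum>k\<in>UNIV. v$k * contract (indm m) (u (g(m:=g m))) (d - 1) (k#[])))) (at (g m))"
    by (rule contract_deriv[where Yt="\<lambda>t. indm m"]) (auto simp: symt_Im W)
  have fe: "(\<lambda>t. contract (indm m) (u (g(m:=t))) d []) = (\<lambda>t. \<Sum>is\<in>{xs. mset xs = m}. prod_list (map (\<lambda>i. u (g(m:=t)) $ i) is))"
    by (rule ext) (rule contract_Im_fiber[OF m])
  have "(\<Sum>is\<in>{xs. mset xs = m}. D is) = contract (\<lambda>is. 0) (u (g(m:=g m))) d [] + real d * (\<Sum>k\<in>UNIV. v$k * contract (indm m) (u (g(m:=g m))) (d - 1) (k#[]))"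
    using DERIV_unique[OF S1 S2[unfolded fe]] .
  then show ?thesis by (simp add: pD contract_zero)
qed

lemma eig_deriv:
  fixes g :: "'n::finite multiset \<Rightarrow> real" and x :: "real^'n"
    and \<mu> :: "('n multiset \<Rightarrow> real) \<Rightarrow> real" and u :: "('n multiset \<Rightarrow> real) \<Rightarrow> real^'n"
  assumes eig: "\<And>t. is_eigenpair d (spiked lam x (g(m:=t))) (\<mu> (g(m:=t))) (u (g(m:=t)))"
    and Dmu: "((\<lambda>t. \<mu> (g(m:=t))) has_real_derivative \<alpha>) (at (g m))"
    and Du: "\<And>i. ((\<lambda>t. u (g(m:=t)) $ i) has_real_derivative v $ i) (at (g m))"
  shows "(1 / sqrt (real CARD('n))) * contract (indm m) (u g) (d-1) [j]
           + real (d-1) * (\<Sum>k\<in>UNIV. v$k * contract (spiked lam x g) (u g) (d-2) (k#[j]))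
         = \<alpha> * u g $ j + \<mu> g * v $ j"
    and "(\<Sum>i\<in>UNIV. u g $ i * v $ i) = 0"
proof -
  have D1: "((\<lambda>t. contract (spiked lam x (g(m:=t))) (u (g(m:=t))) (d-1) [j]) has_real_derivative
      (contract (\<lambda>is. (1 / sqrt (real CARD('n))) * indm m is) (u (g(m:=g m))) (d-1) [j]
        + real (d-1) * (\<Sum>k\<in>UNIV. v$k * contract (spiked lam x (g(m:=g m))) (u (g(m:=g m))) (d-1-1) (k#[j])))) (at (g m))"
    by (rule contract_deriv[where Yt="\<lambda>t. spiked lam x (g(m:=t))", OF spiked_deriv Du symt_spiked])
  have fe: "(\<lambda>t. contract (spiked lam x (g(m:=t))) (u (g(m:=t))) (d-1) [j]) = (\<lambda>t. \<mu> (g(m:=t)) * u (g(m:=t)) $ j)"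
    by (rule ext) (rule eig_comp(1)[OF eig])
  have D2: "((\<lambda>t. \<mu> (g(m:=t)) * u (g(m:=t)) $ j) has_real_derivative \<alpha> * u (g(m:=g m)) $ j + v $ j * \<mu> (g(m:=g m))) (at (g m))"
    by (rule DERIV_mult[OF Dmu Du])
  have "contract (\<lambda>is. (1 / sqrt (real CARD('n))) * indm m is) (u (g(m:=g m))) (d-1) [j]
        + real (d-1) * (\<Sum>k\<in>UNIV. v$k * contract (spiked lam x (g(m:=g m))) (u (g(m:=g m))) (d-1-1) (k#[j]))
      = \<alpha> * u (g(m:=g m)) $ j + v $ j * \<mu> (g(m:=g m))"
    using DERIV_unique[OF D1[unfolded fe] D2] .
  then show "(1 / sqrt (real CARD('n))) * contract (indm m) (u g) (d-1) [j]
           + real (d-1) * (\<Sum>k\<in>UNIV. v$k * contract (spiked lam x g) (u g) (d-2) (k#[j]))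
         = \<alpha> * u g $ j + \<mu> g * v $ j"
    unfolding contract_scale fun_upd_triv by (simp add: mult.commute numeral_2_eq_2)
  have N1: "((\<lambda>t. \<Sum>i\<in>UNIV. u (g(m:=t)) $ i * u (g(m:=t)) $ i) has_real_derivative
       (\<Sum>i\<in>UNIV. v $ i * u (g(m:=g m)) $ i + v $ i * u (g(m:=g m)) $ i)) (at (g m))"
    by (intro DERIV_sum DERIV_mult Du)
  have fe2: "(\<lambda>t. \<Sum>i\<in>UNIV. u (g(m:=t)) $ i * u (g(m:=t)) $ i) = (\<lambda>t. 1)"
    by (rule ext) (rule eig_comp(2)[OF eig])
  have "(\<Sum>i\<in>UNIV. v $ i * u (g(m:=g m)) $ i + v $ i * u (g(m:=g m)) $ i) = 0"
    using DERIV_unique[OF N1[unfolded fe2] DERIV_const] .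
  then have "2 * (\<Sum>i\<in>UNIV. u g $ i * v $ i) = 0"
    by (simp add: sum_distrib_left[symmetric] mult.commute)
  then show "(\<Sum>i\<in>UNIV. u g $ i * v $ i) = 0" by simp
qed

lemma B_mult: "((A::real^'n::finite^'n) - c *\<^sub>R mat 1) *v v = A *v v - c *\<^sub>R v"
  by (simp add: matrix_vector_mult_diff_rdistrib scaleR_matrix_vector_assoc[symmetric])

lemma inv_left:
  fixes A :: "real^'n::finite^'n"
  assumes "\<not> has_eigenvalue A c"
  shows "matrix_inv (A - c *\<^sub>R mat 1) ** (A - c *\<^sub>R mat 1) = mat 1"
proof -
  let ?M = "A - c *\<^sub>R mat 1"
  have "\<forall>z. ?M *v z = 0 \<longrightarrow> z = 0"
  proof (intro allI impI)
    fix z assume "?M *v z = 0"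
    then have "A *v z = c *\<^sub>R z" by (simp add: B_mult)
    then show "z = 0" using assms unfolding has_eigenvalue_def by blast
  qed
  then have "\<exists>B. B ** ?M = mat 1" using matrix_left_invertible_ker by blast
  then have "invertible ?M" using invertible_left_inverse by blast
  then have "\<exists>A'. ?M ** A' = mat 1 \<and> A' ** ?M = mat 1" unfolding invertible_def .
  from someI_ex[OF this] show ?thesis unfolding matrix_inv_def by blast
qed

lemma S_inner:
  fixes u a b :: "real^'n::finite"
  assumes u1: "(\<Sum>i\<in>UNIV. u$i * u$i) = 1" and d1: "d \<ge> 1"
  shows "(\<Sum>m\<in>idx_set d. (1 / real (perm_count m)) * inner a (\<chi> j. contract (indm m) u (d-1) [j])
            * inner b (\<chi> j. contract (indm m) u (d-1) [j]))
    = (1 / real d) * inner a b + (real (d - 1) / real d) * inner a u * inner b u"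
  using S_identity[OF u1 d1, of a b] by (simp add: inner_vec_def)

lemma inner_sym_mat:
  fixes A :: "real^'n::finite^'n"
  assumes "\<And>j k. A$j$k = A$k$j"
  shows "inner x (A *v y) = inner (A *v x) y"
proof -
  have "x v* A = A *v x"
    by (simp add: vector_matrix_mult_def matrix_vector_mult_def vec_eq_iff assms mult.commute)
  then show ?thesis using dot_lmul_matrix[of x A y] by simp
qed

lemma sum_lin:
  fixes a c :: real
  shows "(\<Sum>m\<in>S. a * (c * f m - g m)) = a * (c * sum f S - sum g S)"
proof -
  have "(\<Sum>m\<in>S. a * (c * f m - g m)) = a * (\<Sum>m\<in>S. c * f m - g m)" by (rule sum_distrib_left[symmetric])
  also have "\<dots> = a * ((\<Sum>m\<in>S. c * f m) - sum g S)" by (simp only: sum_subtractf)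
  also have "\<dots> = a * (c * sum f S - sum g S)" by (simp only: sum_distrib_left)
  finally show ?thesis .
qed

lemma alg2:
  fixes D E s c tr mu F :: real
  assumes "D > 0" "E = D - 1" "E \<noteq> 0" "c = E / (F*mu)" "F \<noteq> 0" "mu \<noteq> 0"
  shows "D*(s/E)*(c*1 - ((1/D)*tr + (E/D)*c)) = s*(1/(F*mu) - tr/E)"
proof -
  have "D*(s/E)*(c*1 - ((1/D)*tr + (E/D)*c)) = (s/E)*(D*c - tr - E*c)"
    using assms(1,3) by (simp add: field_simps)
  also have "D*c - tr - E*c = c - tr" using assms(2) by (simp add: left_diff_distrib[symmetric])
  also have "(s/E)*(c - tr) = s*(c/E - tr/E)" by (simp add: diff_divide_distrib[symmetric])
  also have "c/E = 1/(F*mu)" using assms(3-6) by simp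
  finally show ?thesis .
qed

lemma pointwise:
  fixes g :: "'n::finite multiset \<Rightarrow> real" and x :: "real^'n"
    and \<mu> :: "('n multiset \<Rightarrow> real) \<Rightarrow> real" and u :: "('n multiset \<Rightarrow> real) \<Rightarrow> real^'n"
  assumes d3: "d \<ge> 3"
    and eigm: "\<And>m t. m \<in> idx_set d \<Longrightarrow> is_eigenpair d (spiked lam x (g(m:=t))) (\<mu> (g(m:=t))) (u (g(m:=t)))"
    and eig0: "is_eigenpair d (spiked lam x g) (\<mu> g) (u g)"
    and dmu: "\<And>m. m \<in> idx_set d \<Longrightarrow> (\<lambda>t. \<mu> (g(m:=t))) differentiable (at (g m))"
    and du: "\<And>m i. m \<in> idx_set d \<Longrightarrow> (\<lambda>t. u (g(m:=t)) $ i) differentiable (at (g m))"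
    and mu0: "\<mu> g \<noteq> 0"
    and ne: "\<not> has_eigenvalue (contract_mat (spiked lam x g) (u g) (d - 2)) (\<mu> g / real (d - 1))"
  shows "(\<Sum>is\<in>L d. (1 / real (perm_count (mset is))) * partial (\<lambda>h. prod_list (map (\<lambda>i. u h $ i) is)) (mset is) g)
     = (1 / sqrt (real CARD('n))) * (1 / (real (d-2) * \<mu> g)
        - trace (matrix_inv (contract_mat (spiked lam x g) (u g) (d - 2) - (\<mu> g / real (d - 1)) *\<^sub>R mat 1)) / real (d-1))"
proof -
  define u0 where "u0 = u g"
  define \<mu>0 where "\<mu>0 = \<mu> g"
  define Y0 where "Y0 = spiked lam x g"
  define s where "s = 1 / sqrt (real CARD('n))"
  define A where "A = contract_mat Y0 u0 (d - 2)"
  define B where "B = A - (\<mu>0 / real (d - 1)) *\<^sub>R mat 1"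
  define R where "R = matrix_inv B"
  define K where "K m = (\<chi> j. contract (indm m) u0 (d-1) [j])" for m
  define vv where "vv m = (\<chi> i. deriv (\<lambda>t. u (g(m:=t)) $ i) (g m))" for m
  define al where "al m = deriv (\<lambda>t. \<mu> (g(m:=t))) (g m)" for m
  define c where "c = real (d - 1) / (real (d - 2) * \<mu>0)"
  have d1: "real (d - 1) > 0" "real (d - 2) > 0" "d \<ge> 1" using d3 by auto
  have Dv: "((\<lambda>t. u (g(m:=t)) $ i) has_real_derivative vv m $ i) (at (g m))" if "m \<in> idx_set d" for m i
    unfolding vv_def using du[OF that] DERIV_deriv_iff_real_differentiable by auto
  have Dal: "((\<lambda>t. \<mu> (g(m:=t))) has_real_derivative al m) (at (g m))" if "m \<in> idx_set d" for m
    unfolding al_def using dmu[OF that] DERIV_deriv_iff_real_differentiable by auto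
  have u1: "(\<Sum>i\<in>UNIV. u0$i * u0$i) = 1" unfolding u0_def by (rule eig_comp(2)[OF eig0])
  have Asym: "A $ j $ k = A $ k $ j" for j k
    unfolding A_def contract_mat_def Y0_def by (simp add: contract_sym[OF symt_spiked])
  have Ajk: "contract Y0 u0 (d-2) (k#[j]) = A $ j $ k" for j k
    using Asym[of k j] unfolding A_def contract_mat_def by simp
  have Au: "A *v u0 = \<mu>0 *\<^sub>R u0"
  proof -
    have "(A *v u0) $ j = \<mu>0 * u0 $ j" for j
    proof -
      have "(A *v u0) $ j = (\<Sum>k\<in>UNIV. u0 $ k * contract Y0 u0 (d-2) (k#[j]))"
        by (simp add: matrix_vector_mult_def Ajk mult.commute)
      also have "\<dots> = contract Y0 u0 (Suc (d-2)) [j]" by (simp add: contract_Suc)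
      also have "Suc (d-2) = d - 1" using d3 by simp
      also have "contract Y0 u0 (d - 1) [j] = \<mu>0 * u0 $ j"
        unfolding Y0_def u0_def \<mu>0_def by (rule eig_comp(1)[OF eig0])
      finally show ?thesis .
    qed
    then show ?thesis by (simp add: vec_eq_iff)
  qed
  have RB: "R ** B = mat 1"
    unfolding R_def B_def A_def Y0_def u0_def \<mu>0_def by (rule inv_left[OF ne])
  have rd: "real (d-1) = real d - 1" "real (d-2) = real d - 2" using d3 by auto
  have beta: "\<mu>0 - \<mu>0 / real (d - 1) = \<mu>0 * real (d-2) / real (d-1)"
    using d1 rd by (simp add: field_simps)
  have Bu: "B *v u0 = (\<mu>0 * real (d-2) / real (d-1)) *\<^sub>R u0"
    unfolding B_def B_mult Au beta[symmetric] by (simp add: algebra_simps)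
  have Ru: "R *v u0 = c *\<^sub>R u0"
  proof -
    have "u0 = R *v (B *v u0)" using RB by (simp add: matrix_vector_mul_assoc)
    then have "u0 = (\<mu>0 * real (d-2) / real (d-1)) *\<^sub>R (R *v u0)"
      by (simp add: Bu matrix_vector_mult_scaleR)
    moreover have bnz: "\<mu>0 * real (d-2) / real (d-1) \<noteq> 0" using mu0 d1 unfolding \<mu>0_def by simp
    ultimately have "(1 / (\<mu>0 * real (d-2) / real (d-1))) *\<^sub>R u0 = R *v u0"
      by (metis (no_types, lifting) nonzero_divide_eq_eq scaleR_scaleR scaleR_one)
    moreover have "1 / (\<mu>0 * real (d-2) / real (d-1)) = c" unfolding c_def by (simp add: mult.commute)
    ultimately show ?thesis by simp
  qed
  have key: "inner (vv m) (K m) = (s / real (d-1)) * (c * inner u0 (K m) * inner u0 (K m) - inner (R *v K m) (K m))"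
    if m: "m \<in> idx_set d" for m
  proof -
    note ED = eig_deriv[where g=g and m=m and \<mu>=\<mu> and u=u, OF eigm[OF m] Dal[OF m] Dv[OF m]]
    have E1: "s * K m $ j + real (d-1) * (A *v vv m) $ j = al m * u0 $ j + \<mu>0 * vv m $ j" for j
    proof -
      have "(A *v vv m) $ j = (\<Sum>k\<in>UNIV. vv m $ k * contract Y0 u0 (d-2) (k#[j]))"
        by (simp add: matrix_vector_mult_def Ajk mult.commute)
      then show ?thesis using ED(1)[of j] unfolding s_def K_def u0_def \<mu>0_def Y0_def by simp
    qed
    have orth: "inner u0 (vv m) = 0" using ED(2) unfolding u0_def by (simp add: inner_vec_def)
    have "inner u0 (A *v vv m) = inner (A *v u0) (vv m)" by (rule inner_sym_mat[OF Asym])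
    also have "\<dots> = 0" using orth by (simp add: Au)
    finally have uAv: "inner u0 (A *v vv m) = 0" .
    have alv: "al m = s * inner u0 (K m)"
    proof -
      have "(\<Sum>j\<in>UNIV. u0 $ j * (s * K m $ j + real (d-1) * (A *v vv m) $ j))
          = (\<Sum>j\<in>UNIV. u0 $ j * (al m * u0 $ j + \<mu>0 * vv m $ j))"
        using E1 by simp
      then have "s * inner u0 (K m) + real (d-1) * inner u0 (A *v vv m) = al m * inner u0 u0 + \<mu>0 * inner u0 (vv m)"
        by (simp add: inner_vec_def distrib_left sum.distrib sum_distrib_left mult_ac)
      then show ?thesis using uAv orth u1 by (simp add: inner_vec_def)
    qed
    have Bv: "B *v vv m = (1 / real (d-1)) *\<^sub>R (al m *\<^sub>R u0 - s *\<^sub>R K m)"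
    proof -
      have "real (d-1) *\<^sub>R (A *v vv m) = al m *\<^sub>R u0 + \<mu>0 *\<^sub>R vv m - s *\<^sub>R K m"
        using E1 by (simp add: vec_eq_iff algebra_simps)
      then have "A *v vv m = (1 / real (d-1)) *\<^sub>R (al m *\<^sub>R u0 + \<mu>0 *\<^sub>R vv m - s *\<^sub>R K m)"
        using d1 by (metis (no_types, lifting) less_irrefl scaleR_one scaleR_scaleR nonzero_divide_eq_eq divide_inverse_commute mult.commute)
      then show ?thesis unfolding B_def B_mult using d1 by (simp add: algebra_simps)
    qed
    have "vv m = R *v (B *v vv m)" using RB by (simp add: matrix_vector_mul_assoc)
    also have "\<dots> = (1 / real (d-1)) *\<^sub>R (al m *\<^sub>R (R *v u0) - s *\<^sub>R (R *v K m))"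
      by (simp add: Bv matrix_vector_mult_scaleR matrix_vector_mult_diff_distrib)
    finally have "vv m = (1 / real (d-1)) *\<^sub>R ((al m * c) *\<^sub>R u0 - s *\<^sub>R (R *v K m))"
      by (simp add: Ru)
    then have "inner (vv m) (K m) = (1 / real (d-1)) * ((al m * c) * inner u0 (K m) - s * inner (R *v K m) (K m))"
      by (simp add: inner_diff_left)
    then show ?thesis using alv by (simp add: field_simps)
  qed
  have psum: "(\<Sum>is\<in>{xs. mset xs = m}. partial (\<lambda>h. prod_list (map (\<lambda>i. u h $ i) is)) m g)
     = real d * inner (vv m) (K m)" if m: "m \<in> idx_set d" for m
    using psum_lemma[OF m Dv[OF m]] unfolding K_def u0_def by (simp add: inner_vec_def)
  have S1: "(\<Sum>is\<in>L d. (1 / real (perm_count (mset is))) * partial (\<lambda>h. prod_list (map (\<lambda>i. u h $ i) is)) (mset is) g)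
      = (\<Sum>m\<in>idx_set d. (1 / real (perm_count m)) * (real d * inner (vv m) (K m)))"
    unfolding sum_group_L
  proof (rule sum.cong[OF refl])
    fix m :: "'n multiset" assume m: "m \<in> idx_set d"
    have "(\<Sum>is\<in>{xs. mset xs = m}. (1 / real (perm_count (mset is))) * partial (\<lambda>h. prod_list (map (\<lambda>i. u h $ i) is)) (mset is) g)
        = (\<Sum>is\<in>{xs. mset xs = m}. (1 / real (perm_count m)) * partial (\<lambda>h. prod_list (map (\<lambda>i. u h $ i) is)) m g)"
      by (rule sum.cong) auto
    also have "\<dots> = (1 / real (perm_count m)) * (\<Sum>is\<in>{xs. mset xs = m}. partial (\<lambda>h. prod_list (map (\<lambda>i. u h $ i) is)) m g)"
      by (simp add: sum_distrib_left)
    also have "\<dots> = (1 / real (perm_count m)) * (real d * inner (vv m) (K m))"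
      by (simp only: psum[OF m])
    finally show "(\<Sum>is\<in>{xs. mset xs = m}. (1 / real (perm_count (mset is))) * partial (\<lambda>h. prod_list (map (\<lambda>i. u h $ i) is)) (mset is) g)
        = (1 / real (perm_count m)) * (real d * inner (vv m) (K m))" .
  qed
  define Q1 where "Q1 = (\<Sum>m\<in>idx_set d. (1 / real (perm_count m)) * inner u0 (K m) * inner u0 (K m))"
  define Q2 where "Q2 = (\<Sum>m\<in>idx_set d. (1 / real (perm_count m)) * inner (R *v K m) (K m))"
  have S2: "(\<Sum>m\<in>idx_set d. (1 / real (perm_count m)) * (real d * inner (vv m) (K m)))
      = real d * (s / real (d-1)) * (c * Q1 - Q2)"
  proof -
    have "(\<Sum>m\<in>idx_set d. (1 / real (perm_count m)) * (real d * inner (vv m) (K m)))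
        = (\<Sum>m\<in>idx_set d. (real d * (s / real (d-1))) * (c * ((1 / real (perm_count m)) * inner u0 (K m) * inner u0 (K m))
            - (1 / real (perm_count m)) * inner (R *v K m) (K m)))"
      by (rule sum.cong[OF refl]) (simp add: key algebra_simps)
    also have "\<dots> = (real d * (s / real (d-1))) * (c * Q1 - Q2)"
      unfolding Q1_def Q2_def by (rule sum_lin)
    finally show ?thesis .
  qed
  have uu: "inner u0 u0 = 1" using u1 by (simp add: inner_vec_def)
  have S3: "Q1 = 1"
  proof -
    have "Q1 = (1 / real d) * inner u0 u0 + (real (d - 1) / real d) * inner u0 u0 * inner u0 u0"
      unfolding Q1_def K_def by (rule S_inner[OF u1 d1(3)])
    also have "\<dots> = 1" using uu d1 rd by (simp add: field_simps)
    finally show ?thesis .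
  qed
  have S4: "Q2 = (1 / real d) * trace R + (real (d-1) / real d) * c"
  proof -
    have e1: "inner (R *v K m) (K m) = (\<Sum>j\<in>UNIV. inner (R $ j) (K m) * inner (axis j 1) (K m))" for m
    proof -
      have ax: "\<And>j. inner (axis j 1) (K m) = K m $ j" by (simp add: inner_axis')
      have "inner (R *v K m) (K m) = (\<Sum>j\<in>UNIV. (R *v K m) $ j * K m $ j)" by (simp add: inner_vec_def)
      then show ?thesis by (simp add: ax matrix_vector_mul_component)
    qed
    have "Q2 = (\<Sum>m\<in>idx_set d. \<Sum>j\<in>UNIV. (1 / real (perm_count m)) * inner (R $ j) (K m) * inner (axis j 1) (K m))"
      unfolding Q2_def e1 by (simp add: sum_distrib_left mult.assoc)
    also have "\<dots> = (\<Sum>j\<in>UNIV. \<Sum>m\<in>idx_set d. (1 / real (perm_count m)) * inner (R $ j) (K m) * inner (axis j 1) (K m))"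
      by (rule sum.swap)
    also have "\<dots> = (\<Sum>j\<in>UNIV. (1 / real d) * inner (R $ j) (axis j 1) + (real (d - 1) / real d) * inner (R $ j) u0 * inner (axis j 1) u0)"
      unfolding K_def by (rule sum.cong[OF refl]) (rule S_inner[OF u1 d1(3)])
    also have "\<dots> = (\<Sum>j\<in>UNIV. (1 / real d) * R $ j $ j + (real (d - 1) / real d) * c * (u0 $ j * u0 $ j))"
    proof (rule sum.cong[OF refl])
      fix j
      have "inner (R $ j) u0 = c * u0 $ j"
        using arg_cong[OF Ru, of "\<lambda>z. z $ j"] by (simp add: matrix_vector_mul_component)
      then show "(1 / real d) * inner (R $ j) (axis j 1) + (real (d - 1) / real d) * inner (R $ j) u0 * inner (axis j 1) u0
          = (1 / real d) * R $ j $ j + (real (d - 1) / real d) * c * (u0 $ j * u0 $ j)"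
        by (simp add: inner_axis inner_axis')
    qed
    also have "\<dots> = (1 / real d) * trace R + (real (d-1) / real d) * c * (\<Sum>j\<in>UNIV. u0 $ j * u0 $ j)"
      by (simp add: sum.distrib sum_distrib_left trace_def)
    finally show ?thesis using u1 by simp
  qed
  have fin: "real d * (s / real (d-1)) * (c * 1 - ((1 / real d) * trace R + (real (d-1) / real d) * c))
      = s * (1 / (real (d-2) * \<mu>0) - trace R / real (d-1))"
    by (rule alg2) (use d1 rd mu0 in \<open>auto simp: c_def \<mu>0_def\<close>)
  show ?thesis
    using S1 S2 S3 S4 fin unfolding s_def R_def B_def A_def Y0_def u0_def \<mu>0_def by simp
qed

lemma mu_expand:
  fixes x w :: "real^'n::finite" and g :: "'n multiset \<Rightarrow> real"
  assumes e: "is_eigenpair d (spiked lam x g) mu w" and d1: "d \<ge> 1"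
  shows "mu = lam * (inner x w)^d + (1 / sqrt (real CARD('n))) * (\<Sum>is\<in>L d. g (mset is) * prod_list (map (\<lambda>i. w $ i) is))"
proof -
  have "mu = mu * (\<Sum>i\<in>UNIV. w$i * w$i)" using eig_comp(2)[OF e] by simp
  also have "\<dots> = (\<Sum>j\<in>UNIV. w $ j * (mu * w $ j))"
    by (simp add: sum_distrib_left mult_ac)
  also have "\<dots> = (\<Sum>j\<in>UNIV. w $ j * contract (spiked lam x g) w (d-1) [j])"
    using eig_comp(1)[OF e] by simp
  also have "\<dots> = contract (spiked lam x g) w (Suc (d-1)) []" by (simp add: contract_Suc)
  also have "Suc (d-1) = d" using d1 by simp
  also have "contract (spiked lam x g) w d [] = (\<Sum>is\<in>L d. spiked lam x g is * prod_list (map (\<lambda>i. w $ i) is))"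
    by (simp add: contract_L)
  also have "\<dots> = (\<Sum>is\<in>L d. lam * prod_list (map (\<lambda>i. x $ i * w $ i) is)
         + (1 / sqrt (real CARD('n))) * (g (mset is) * prod_list (map (\<lambda>i. w $ i) is)))"
  proof (rule sum.cong[OF refl])
    fix "is" :: "'n list"
    have "prod_list (map (\<lambda>i. x $ i) is) * prod_list (map (\<lambda>i. w $ i) is) = prod_list (map (\<lambda>i. x $ i * w $ i) is)"
      by (induct "is") (simp_all add: mult_ac)
    then show "spiked lam x g is * prod_list (map (\<lambda>i. w $ i) is) = lam * prod_list (map (\<lambda>i. x $ i * w $ i) is)
         + (1 / sqrt (real CARD('n))) * (g (mset is) * prod_list (map (\<lambda>i. w $ i) is))"
      by (simp add: spiked_def tensor_pow_def tensor_of_def algebra_simps)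
  qed
  also have "\<dots> = lam * (\<Sum>is\<in>L d. prod_list (map (\<lambda>i. x $ i * w $ i) is))
        + (1 / sqrt (real CARD('n))) * (\<Sum>is\<in>L d. g (mset is) * prod_list (map (\<lambda>i. w $ i) is))"
    by (simp add: sum.distrib sum_distrib_left)
  also have "(\<Sum>is\<in>L d. prod_list (map (\<lambda>i. x $ i * w $ i) is)) = (inner x w)^d"
    by (simp add: sum_L_prod inner_vec_def)
  finally show ?thesis .
qed

lemma alg3:
  fixes sa NN AA BB II TT LL :: real
  assumes "sa * sa = 1/NN"
  shows "LL + sa * (sa * ((1/AA) * II - (1/BB) * TT)) = LL + 1/(AA * NN) * II - 1/(BB * NN) * TT"
proof -
  have "sa * (sa * ((1/AA) * II - (1/BB) * TT)) = (sa * sa) * ((1/AA) * II - (1/BB) * TT)" by (simp only: mult.assoc)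
  also have "\<dots> = (1/NN) * ((1/AA) * II - (1/BB) * TT)" using assms by simp
  also have "\<dots> = 1/(AA * NN) * II - 1/(BB * NN) * TT" by (simp add: right_diff_distrib mult.commute)
  finally show ?thesis by simp
qed

lemma C1_diff:
  assumes "C1_at S F g" "m \<in> S"
  shows "(\<lambda>t. F (g(m := t))) differentiable (at (g m))"
  using assms unfolding C1_at_def by blast

theorem mainTheorem8:
  fixes d :: nat and lam :: real and x :: "real^'n::finite"
    and \<mu> :: "('n multiset \<Rightarrow> real) \<Rightarrow> real"
    and u :: "('n multiset \<Rightarrow> real) \<Rightarrow> real^'n"
  defines "M \<equiv> gote d"
    and "Y \<equiv> spiked lam x"
    and "Rbar \<equiv> (\<lambda>g. matrix_inv (contract_mat (spiked lam x g) (u g) (d - 2) - (\<mu> g / real (d - 1)) *\<^sub>R mat 1))"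
  assumes d3: "d \<ge> 3"
    and lam_pos: "lam > 0"
    and x_unit: "norm x = 1"
    and eig: "\<forall>g\<in>space M. is_eigenpair d (Y g) (\<mu> g) (u g)"
    and C1: "AE g in M. C1_at (idx_set d) \<mu> g \<and> (\<forall>i. C1_at (idx_set d) (\<lambda>h. u h $ i) g)"
    and nondeg: "AE g in M. \<mu> g \<noteq> 0 \<and>
                   \<not> has_eigenvalue (contract_mat (Y g) (u g) (d - 2)) (\<mu> g / real (d - 1))"
    and int_mu: "integrable M \<mu>"
    and int_ov: "integrable M (\<lambda>g. (x \<bullet> u g) ^ d)"
    and int_inv: "integrable M (\<lambda>g. 1 / \<mu> g)"
    and int_tr: "integrable M (\<lambda>g. trace (Rbar g))"
    and ibp: "\<forall>m\<in>idx_set d. \<forall>is. length is = d \<longrightarrow>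
               (let F = (\<lambda>g. prod_list (map (\<lambda>i. u g $ i) is)) in
                  integrable M (\<lambda>g. g m * F g) \<and> integrable M (partial F m) \<and>
                  (\<integral>g. g m * F g \<partial>M) = (1 / real (perm_count m)) * (\<integral>g. partial F m g \<partial>M))"
  shows "(\<integral>g. \<mu> g \<partial>M) =
           lam * (\<integral>g. (x \<bullet> u g) ^ d \<partial>M)
         + 1 / (real (d - 2) * real CARD('n)) * (\<integral>g. 1 / \<mu> g \<partial>M)
         - 1 / (real (d - 1) * real CARD('n)) * (\<integral>g. trace (Rbar g) \<partial>M)"
proof -
  have d1: "d \<ge> 1" using d3 by simp
  define s where "s = 1 / sqrt (real CARD('n))"
  define F where "F is = (\<lambda>g. prod_list (map (\<lambda>i. u g $ i) is))" for "is" :: "'n list"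
  define T where "T g = (\<Sum>is\<in>L d. (1 / real (perm_count (mset is))) * partial (F is) (mset is) g)" for g
  have spM: "space M = PiE (idx_set d) (\<lambda>_. UNIV)"
    unfolding M_def gote_def by (simp add: space_PiM)
  have upd: "g(m:=t) \<in> space M" if "g \<in> space M" "m \<in> idx_set d" for g m t
    using that unfolding spM by (auto simp: PiE_iff extensional_def)
  have ibp': "integrable M (\<lambda>g. g (mset is) * F is g) \<and> integrable M (partial (F is) (mset is)) \<and>
      (\<integral>g. g (mset is) * F is g \<partial>M) = (1 / real (perm_count (mset is))) * (\<integral>g. partial (F is) (mset is) g \<partial>M)"
    if "is \<in> L d" for "is"
    using ibp mset_L_idx[OF that] that unfolding F_def L_def Let_def by auto
  have E1: "\<mu> g = lam * (x \<bullet> u g)^d + s * (\<Sum>is\<in>L d. g (mset is) * F is g)" if "g \<in> space M" for g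
    using mu_expand[OF eig[rule_format, OF that, unfolded Y_def] d1] unfolding s_def F_def by simp
  have intS: "integrable M (\<lambda>g. \<Sum>is\<in>L d. g (mset is) * F is g)"
    by (rule Bochner_Integration.integrable_sum[where f="\<lambda>is g. g (mset is) * F is g"]) (use ibp' in blast)
  have "(\<integral>g. \<mu> g \<partial>M) = (\<integral>g. lam * (x \<bullet> u g)^d + s * (\<Sum>is\<in>L d. g (mset is) * F is g) \<partial>M)"
    by (rule Bochner_Integration.integral_cong[OF refl]) (rule E1)
  also have "\<dots> = lam * (\<integral>g. (x \<bullet> u g)^d \<partial>M) + s * (\<Sum>is\<in>L d. \<integral>g. g (mset is) * F is g \<partial>M)"
    using int_ov intS ibp' by (simp add: Bochner_Integration.integral_sum)
  also have "(\<Sum>is\<in>L d. \<integral>g. g (mset is) * F is g \<partial>M) = (\<Sum>is\<in>L d. (1 / real (perm_count (mset is))) * (\<integral>g. partial (F is) (mset is) g \<partial>M))"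
    using ibp' by (intro sum.cong) auto
  also have "\<dots> = (\<integral>g. T g \<partial>M)"
    unfolding T_def using ibp' by (simp add: Bochner_Integration.integral_sum)
  finally have step1: "(\<integral>g. \<mu> g \<partial>M) = lam * (\<integral>g. (x \<bullet> u g)^d \<partial>M) + s * (\<integral>g. T g \<partial>M)" .
  have intT: "integrable M T"
    unfolding T_def using ibp' by (intro Bochner_Integration.integrable_sum integrable_mult_right) blast
  define G where "G g = s * ((1 / real (d-2)) * (1 / \<mu> g) - (1 / real (d-1)) * trace (Rbar g))" for g
  have intG: "integrable M G" unfolding G_def
    by (intro integrable_mult_right Bochner_Integration.integrable_diff) (use int_inv int_tr in auto)
  have AEeq: "AE g in M. T g = G g"
    using C1 nondeg AE_space
  proof eventually_elim
    case (elim g)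
    then have gs: "g \<in> space M" and C1g: "C1_at (idx_set d) \<mu> g" "\<And>i. C1_at (idx_set d) (\<lambda>h. u h $ i) g"
      and mu0: "\<mu> g \<noteq> 0" and ne: "\<not> has_eigenvalue (contract_mat (spiked lam x g) (u g) (d - 2)) (\<mu> g / real (d - 1))"
      by (auto simp: Y_def)
    have "T g = (1 / sqrt (real CARD('n))) * (1 / (real (d-2) * \<mu> g)
        - trace (matrix_inv (contract_mat (spiked lam x g) (u g) (d - 2) - (\<mu> g / real (d - 1)) *\<^sub>R mat 1)) / real (d-1))"
      unfolding T_def F_def
    proof (rule pointwise[where g=g and \<mu>=\<mu> and u=u and lam=lam and x=x, OF d3 _ _ _ _ mu0 ne])
      show "\<And>m t. m \<in> idx_set d \<Longrightarrow> is_eigenpair d (spiked lam x (g(m:=t))) (\<mu> (g(m:=t))) (u (g(m:=t)))"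
        using eig upd[OF gs] unfolding Y_def by blast
      show "is_eigenpair d (spiked lam x g) (\<mu> g) (u g)" using eig gs unfolding Y_def by blast
      show "\<And>m. m \<in> idx_set d \<Longrightarrow> (\<lambda>t. \<mu> (g(m:=t))) differentiable (at (g m))"
        using C1_diff[OF C1g(1)] .
      show "\<And>m i. m \<in> idx_set d \<Longrightarrow> (\<lambda>t. u (g(m:=t)) $ i) differentiable (at (g m))"
        using C1_diff[OF C1g(2)] .
    qed
    then show ?case unfolding G_def Rbar_def s_def using mu0 by (simp add: field_simps)
  qed
  have "(\<integral>g. T g \<partial>M) = (\<integral>g. G g \<partial>M)"
    by (rule integral_cong_AE[OF borel_measurable_integrable[OF intT] borel_measurable_integrable[OF intG] AEeq])
  also have "\<dots> = s * ((1 / real (d-2)) * (\<integral>g. 1 / \<mu> g \<partial>M) - (1 / real (d-1)) * (\<integral>g. trace (Rbar g) \<partial>M))"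
  proof -
    have i1: "integrable M (\<lambda>g. (1 / real (d-2)) * (1 / \<mu> g))" using int_inv by (intro integrable_mult_right) blast
    have i2: "integrable M (\<lambda>g. (1 / real (d-1)) * trace (Rbar g))" using int_tr by (intro integrable_mult_right) blast
    have a1: "(\<integral>g. G g \<partial>M) = s * (\<integral>g. (1 / real (d-2)) * (1 / \<mu> g) - (1 / real (d-1)) * trace (Rbar g) \<partial>M)"
      unfolding G_def by (rule integral_mult_right_zero)
    have a2: "(\<integral>g. (1 / real (d-2)) * (1 / \<mu> g) - (1 / real (d-1)) * trace (Rbar g) \<partial>M)
        = (\<integral>g. (1 / real (d-2)) * (1 / \<mu> g) \<partial>M) - (\<integral>g. (1 / real (d-1)) * trace (Rbar g) \<partial>M)"
      by (rule Bochner_Integration.integral_diff[OF i1 i2])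
    have a3: "(\<integral>g. (1 / real (d-2)) * (1 / \<mu> g) \<partial>M) = (1 / real (d-2)) * (\<integral>g. 1 / \<mu> g \<partial>M)"
      by (rule integral_mult_right_zero)
    have a4: "(\<integral>g. (1 / real (d-1)) * trace (Rbar g) \<partial>M) = (1 / real (d-1)) * (\<integral>g. trace (Rbar g) \<partial>M)"
      by (rule integral_mult_right_zero)
    show ?thesis unfolding a1 a2 a3 a4 ..
  qed
  finally have step2: "(\<integral>g. T g \<partial>M) = s * ((1 / real (d-2)) * (\<integral>g. 1 / \<mu> g \<partial>M) - (1 / real (d-1)) * (\<integral>g. trace (Rbar g) \<partial>M))" .
  have ss: "s * s = 1 / real CARD('n)" unfolding s_def by simp
  show ?thesis
    unfolding step1 step2 by (rule alg3[OF ss])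
qed

end
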